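(* (Provably in $\mathsf{Z}^-_{\mathrm{FTM}\omega}$.) For any set $X$ there is a digraph $A\subseteq\omega\times\omega$ which is well-founded, extensional and vertex, such that $X=\eta_A(\mathrm{ver}(A))$.
   Context: $\mathsf{Z}^-_{\mathrm{FTM}\omega}$ is Zermelo set theory without Power Set and Choice (Extensionality, Pairing, Union, Infinity, Regularity, Separation) plus: (FC) every set $X$ has a superset $Y$ containing all finite subsets of $Y$; (TS) every set has a transitive superset; (MC) every set binary relation (digraph) $A$ that is well-founded (every nonempty subset of $\mathrm{fld}(A)=\mathrm{dom}A\cup\mathrm{ran}A$ has an element $a$ with no element $j$ of the subset satisfying $jAa$) and extensional (for $u,v\in\mathrm{fld}(A)$, $\{j:jAu\}=\{j:jAv\}$ implies $u=v$) admits a transitive set $X$ and a bijection $\eta:\mathrm{fld}(A)\to X$ with $jAk\iff\eta(j)\in\eta(k)$ (this $\eta$ is unique and denoted $\eta_A$); (Count) every set admits an injection into $\omega$. A digraph $A$ is vertex if $A=\emptyset$ or there is a unique $v=\mathrm{ver}(A)\in\mathrm{fld}(A)$ such that every $j\in\mathrm{fld}(A)$ is connected to $v$ by a finite chain $j=j_0Aj_1A\cdots Aj_K=v$ ($K\ge0$). *)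

theory Defs
  imports Main
begin

text \<open>
  We render "provably in Z^-_FTMomega" semantically: the conclusion holds in every
  (first-order) model (M, mem) of the theory, where M is an arbitrary HOL type.
  By Goedel's completeness theorem this is equivalent to provability.  The
  Separation schema is expressed with an explicit datatype of first-order formulas
  in the language {mem, =}, so only first-order definable separation is assumed.
\<close>

datatype fm =
    FMem nat nat
  | FEq nat nat
  | FNeg fm
  | FAnd fm fm
  | FEx nat fm

primrec sat :: "('a \<Rightarrow> 'a \<Rightarrow> bool) \<Rightarrow> (nat \<Rightarrow> 'a) \<Rightarrow> fm \<Rightarrow> bool" where
  "sat mem env (FMem i j) = mem (env i) (env j)"
| "sat mem env (FEq i j) = (env i = env j)"
| "sat mem env (FNeg p) = (\<not> sat mem env p)"
| "sat mem env (FAnd p q) = (sat mem env p \<and> sat mem env q)"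
| "sat mem env (FEx i p) = (\<exists>y. sat mem (env(i := y)) p)"

context
  fixes mem :: "'a \<Rightarrow> 'a \<Rightarrow> bool" (infix "\<in>\<^sub>m" 50)
begin

definition m_empty :: "'a \<Rightarrow> bool" where
  "m_empty x \<longleftrightarrow> (\<forall>y. \<not> y \<in>\<^sub>m x)"

definition m_subset :: "'a \<Rightarrow> 'a \<Rightarrow> bool" where
  "m_subset x y \<longleftrightarrow> (\<forall>z. z \<in>\<^sub>m x \<longrightarrow> z \<in>\<^sub>m y)"

definition m_upair :: "'a \<Rightarrow> 'a \<Rightarrow> 'a \<Rightarrow> bool" where
  "m_upair z a b \<longleftrightarrow> (\<forall>w. w \<in>\<^sub>m z \<longleftrightarrow> (w = a \<or> w = b))"

definition m_pair :: "'a \<Rightarrow> 'a \<Rightarrow> 'a \<Rightarrow> bool" where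
  "m_pair p a b \<longleftrightarrow> (\<forall>w. w \<in>\<^sub>m p \<longleftrightarrow> (m_upair w a a \<or> m_upair w a b))"

definition m_succ :: "'a \<Rightarrow> 'a \<Rightarrow> bool" where
  "m_succ s x \<longleftrightarrow> (\<forall>y. y \<in>\<^sub>m s \<longleftrightarrow> (y \<in>\<^sub>m x \<or> y = x))"

definition m_inductive :: "'a \<Rightarrow> bool" where
  "m_inductive w \<longleftrightarrow> (\<exists>e. e \<in>\<^sub>m w \<and> m_empty e) \<and>
                      (\<forall>x. x \<in>\<^sub>m w \<longrightarrow> (\<exists>s. s \<in>\<^sub>m w \<and> m_succ s x))"

definition m_omega :: "'a \<Rightarrow> bool" where
  "m_omega w \<longleftrightarrow> m_inductive w \<and> (\<forall>z. m_inductive z \<longrightarrow> m_subset w z)"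

definition m_transitive :: "'a \<Rightarrow> bool" where
  "m_transitive x \<longleftrightarrow> (\<forall>y z. y \<in>\<^sub>m x \<longrightarrow> z \<in>\<^sub>m y \<longrightarrow> z \<in>\<^sub>m x)"

definition m_rel :: "'a \<Rightarrow> bool" where
  "m_rel A \<longleftrightarrow> (\<forall>p. p \<in>\<^sub>m A \<longrightarrow> (\<exists>a b. m_pair p a b))"

definition m_edge :: "'a \<Rightarrow> 'a \<Rightarrow> 'a \<Rightarrow> bool" where
  "m_edge A a b \<longleftrightarrow> (\<exists>p. p \<in>\<^sub>m A \<and> m_pair p a b)"

definition m_fld :: "'a \<Rightarrow> 'a \<Rightarrow> bool" where
  "m_fld A x \<longleftrightarrow> (\<exists>y. m_edge A x y \<or> m_edge A y x)"

definition m_wf :: "'a \<Rightarrow> bool" where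
  "m_wf A \<longleftrightarrow> (\<forall>S. (\<exists>x. x \<in>\<^sub>m S) \<and> (\<forall>x. x \<in>\<^sub>m S \<longrightarrow> m_fld A x) \<longrightarrow>
                   (\<exists>a. a \<in>\<^sub>m S \<and> (\<forall>j. j \<in>\<^sub>m S \<longrightarrow> \<not> m_edge A j a)))"

definition m_extensional :: "'a \<Rightarrow> bool" where
  "m_extensional A \<longleftrightarrow> (\<forall>u v. m_fld A u \<and> m_fld A v \<and>
                          (\<forall>j. m_edge A j u \<longleftrightarrow> m_edge A j v) \<longrightarrow> u = v)"

definition m_fun :: "'a \<Rightarrow> bool" where
  "m_fun f \<longleftrightarrow> m_rel f \<and> (\<forall>x y y'. m_edge f x y \<and> m_edge f x y' \<longrightarrow> y = y')"

definition m_injective :: "'a \<Rightarrow> bool" where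
  "m_injective f \<longleftrightarrow> (\<forall>x x' y. m_edge f x y \<and> m_edge f x' y \<longrightarrow> x = x')"

definition m_dom :: "'a \<Rightarrow> 'a \<Rightarrow> bool" where
  "m_dom f X \<longleftrightarrow> (\<forall>x. (\<exists>y. m_edge f x y) \<longleftrightarrow> x \<in>\<^sub>m X)"

definition m_ran :: "'a \<Rightarrow> 'a \<Rightarrow> bool" where
  "m_ran f Y \<longleftrightarrow> (\<forall>y. (\<exists>x. m_edge f x y) \<longleftrightarrow> y \<in>\<^sub>m Y)"

text \<open>function value f(x) = y, with the convention f(x) = \<emptyset> for x outside dom f\<close>
definition m_val :: "'a \<Rightarrow> 'a \<Rightarrow> 'a \<Rightarrow> bool" where
  "m_val f x y \<longleftrightarrow> m_edge f x y \<or> ((\<nexists>z. m_edge f x z) \<and> m_empty y)"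

definition m_finite :: "'a \<Rightarrow> bool" where
  "m_finite F \<longleftrightarrow> (\<exists>w n f. m_omega w \<and> n \<in>\<^sub>m w \<and> m_fun f \<and> m_injective f \<and>
                      m_dom f n \<and> m_ran f F)"

definition m_collapse :: "'a \<Rightarrow> 'a \<Rightarrow> 'a \<Rightarrow> bool" where
  "m_collapse A X eta \<longleftrightarrow>
     m_transitive X \<and> m_fun eta \<and> m_injective eta \<and>
     (\<forall>x. (\<exists>y. m_edge eta x y) \<longleftrightarrow> m_fld A x) \<and> m_ran eta X \<and>
     (\<forall>j k a b. m_edge eta j a \<and> m_edge eta k b \<longrightarrow> (m_edge A j k \<longleftrightarrow> a \<in>\<^sub>m b))"

text \<open>there is a finite chain j = j_0 A j_1 A ... A j_K = v (K \<ge> 0):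
  c is a function with domain K+1 = {0,...,K}, K \<in> omega\<close>
definition m_chain :: "'a \<Rightarrow> 'a \<Rightarrow> 'a \<Rightarrow> bool" where
  "m_chain A j v \<longleftrightarrow>
     (\<exists>w K K1 c e. m_omega w \<and> K \<in>\<^sub>m w \<and> m_succ K1 K \<and> m_empty e \<and>
        m_fun c \<and> m_dom c K1 \<and> m_edge c e j \<and> m_edge c K v \<and>
        (\<forall>i i1 a b. i \<in>\<^sub>m K \<and> m_succ i1 i \<and> m_edge c i a \<and> m_edge c i1 b \<longrightarrow> m_edge A a b))"

definition m_is_vertex :: "'a \<Rightarrow> 'a \<Rightarrow> bool" where
  "m_is_vertex A v \<longleftrightarrow> m_fld A v \<and> (\<forall>j. m_fld A j \<longrightarrow> m_chain A j v)"

definition m_vertex_digraph :: "'a \<Rightarrow> bool" where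
  "m_vertex_digraph A \<longleftrightarrow> m_empty A \<or> (\<exists>!v. m_is_vertex A v)"

text \<open>v = ver(A); convention ver(\<emptyset>) = \<emptyset>\<close>
definition m_ver :: "'a \<Rightarrow> 'a \<Rightarrow> bool" where
  "m_ver A v \<longleftrightarrow> (m_empty A \<and> m_empty v) \<or> (\<not> m_empty A \<and> m_is_vertex A v)"

definition Z_FTM_omega :: bool where
  "Z_FTM_omega \<longleftrightarrow>
     \<comment> \<open>Extensionality\<close>
     (\<forall>x y. (\<forall>z. z \<in>\<^sub>m x \<longleftrightarrow> z \<in>\<^sub>m y) \<longrightarrow> x = y) \<and>
     \<comment> \<open>Pairing\<close>
     (\<forall>a b. \<exists>z. m_upair z a b) \<and>
     \<comment> \<open>Union\<close>
     (\<forall>x. \<exists>u. \<forall>y. y \<in>\<^sub>m u \<longleftrightarrow> (\<exists>z. z \<in>\<^sub>m x \<and> y \<in>\<^sub>m z)) \<and>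
     \<comment> \<open>Infinity\<close>
     (\<exists>w. m_inductive w) \<and>
     \<comment> \<open>Regularity\<close>
     (\<forall>x. (\<exists>y. y \<in>\<^sub>m x) \<longrightarrow> (\<exists>y. y \<in>\<^sub>m x \<and> (\<forall>z. z \<in>\<^sub>m y \<longrightarrow> \<not> z \<in>\<^sub>m x))) \<and>
     \<comment> \<open>Separation schema (first-order formulas with parameters)\<close>
     (\<forall>\<phi> env i a. \<exists>b. \<forall>y. y \<in>\<^sub>m b \<longleftrightarrow> (y \<in>\<^sub>m a \<and> sat (\<in>\<^sub>m) (env(i := y)) \<phi>)) \<and>
     \<comment> \<open>FC\<close>
     (\<forall>X. \<exists>Y. m_subset X Y \<and> (\<forall>F. m_subset F Y \<and> m_finite F \<longrightarrow> F \<in>\<^sub>m Y)) \<and>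
     \<comment> \<open>TS\<close>
     (\<forall>X. \<exists>T. m_subset X T \<and> m_transitive T) \<and>
     \<comment> \<open>MC\<close>
     (\<forall>A. m_rel A \<and> m_wf A \<and> m_extensional A \<longrightarrow> (\<exists>X eta. m_collapse A X eta)) \<and>
     \<comment> \<open>Count\<close>
     (\<forall>X. \<exists>w f. m_omega w \<and> m_fun f \<and> m_injective f \<and> m_dom f X \<and>
               (\<forall>y. (\<exists>x. m_edge f x y) \<longrightarrow> y \<in>\<^sub>m w))"

end

end

theory Submission
  imports Defs
begin


definition FOr where "FOr p q = FNeg (FAnd (FNeg p) (FNeg q))"
definition FImp where "FImp p q = FNeg (FAnd p (FNeg q))"
definition FIff where "FIff p q = FAnd (FImp p q) (FImp q p)"
definition FAll where "FAll i p = FNeg (FEx i (FNeg p))"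

lemma sat_derived[simp]:
  "sat mem env (FOr p q) = (sat mem env p \<or> sat mem env q)"
  "sat mem env (FImp p q) = (sat mem env p \<longrightarrow> sat mem env q)"
  "sat mem env (FIff p q) = (sat mem env p \<longleftrightarrow> sat mem env q)"
  "sat mem env (FAll i p) = (\<forall>y. sat mem (env(i:=y)) p)"
  by (auto simp: FOr_def FImp_def FIff_def FAll_def)

definition "fm_empty x t = FAll t (FNeg (FMem t x))"
definition "fm_upair z a b t = FAll t (FIff (FMem t z) (FOr (FEq t a) (FEq t b)))"
definition "fm_pair p a b t u = FAll t (FIff (FMem t p) (FOr (fm_upair t a a u) (fm_upair t a b u)))"
definition "fm_edge X a b q t u = FEx q (FAnd (FMem q X) (fm_pair q a b t u))"
definition "fm_succ s x t = FAll t (FIff (FMem t s) (FOr (FMem t x) (FEq t x)))"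

lemma sat_empty[simp]: "t \<noteq> x \<Longrightarrow> sat mem env (fm_empty x t) = m_empty mem (env x)"
  by (simp add: fm_empty_def m_empty_def)
lemma sat_upair[simp]: "t \<noteq> z \<Longrightarrow> t \<noteq> a \<Longrightarrow> t \<noteq> b \<Longrightarrow>
   sat mem env (fm_upair z a b t) = m_upair mem (env z) (env a) (env b)"
  by (simp add: fm_upair_def m_upair_def)
lemma sat_pair[simp]: "t \<noteq> p \<Longrightarrow> t \<noteq> a \<Longrightarrow> t \<noteq> b \<Longrightarrow> u \<noteq> t \<Longrightarrow> u \<noteq> a \<Longrightarrow> u \<noteq> b \<Longrightarrow>
   sat mem env (fm_pair p a b t u) = m_pair mem (env p) (env a) (env b)"
  by (simp add: fm_pair_def m_pair_def)
lemma sat_edge[simp]: "q \<noteq> X \<Longrightarrow> q \<noteq> a \<Longrightarrow> q \<noteq> b \<Longrightarrow> t \<noteq> q \<Longrightarrow> t \<noteq> a \<Longrightarrow> t \<noteq> b \<Longrightarrow> u \<noteq> t \<Longrightarrow> u \<noteq> a \<Longrightarrow> u \<noteq> b \<Longrightarrow>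
   sat mem env (fm_edge X a b q t u) = m_edge mem (env X) (env a) (env b)"
  by (simp add: fm_edge_def m_edge_def)
lemma sat_succ[simp]: "t \<noteq> s \<Longrightarrow> t \<noteq> x \<Longrightarrow>
   sat mem env (fm_succ s x t) = m_succ mem (env s) (env x)"
  by (simp add: fm_succ_def m_succ_def)



locale zm = fixes mem :: "'a \<Rightarrow> 'a \<Rightarrow> bool" assumes Z: "Z_FTM_omega mem"
begin

lemma AX: "(\<forall>x y. (\<forall>z. mem z x \<longleftrightarrow> mem z y) \<longrightarrow> x = y)"
  using Z unfolding Z_FTM_omega_def by (rule conjunct1)
lemma ext: assumes "\<And>z. mem z x = mem z y" shows "x = y"
  using AX assms by blast
lemma upair_ex: "\<exists>z. m_upair mem z a b"
  using Z unfolding Z_FTM_omega_def by blast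
lemma union_ex: "\<exists>u. \<forall>y. mem y u \<longleftrightarrow> (\<exists>z. mem z x \<and> mem y z)"
  using Z unfolding Z_FTM_omega_def by blast
lemma inf_ex: "\<exists>w. m_inductive mem w"
  using Z unfolding Z_FTM_omega_def by blast
lemma reg: "mem y x \<Longrightarrow> \<exists>y. mem y x \<and> (\<forall>z. mem z y \<longrightarrow> \<not> mem z x)"
  using Z unfolding Z_FTM_omega_def by blast
lemma sep: assumes "\<And>y. sat mem (env(i:=y)) \<phi> = P y"
  shows "\<exists>b. \<forall>y. mem y b \<longleftrightarrow> mem y a \<and> P y"
proof -
  from Z have "\<exists>b. \<forall>y. mem y b \<longleftrightarrow> (mem y a \<and> sat mem (env(i := y)) \<phi>)"
    unfolding Z_FTM_omega_def by blast
  thus ?thesis using assms by simp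
qed
lemma fc: "\<exists>Y. m_subset mem X Y \<and> (\<forall>F. m_subset mem F Y \<and> m_finite mem F \<longrightarrow> mem F Y)"
  using Z unfolding Z_FTM_omega_def by blast
lemma ts: "\<exists>T. m_subset mem X T \<and> m_transitive mem T"
  using Z unfolding Z_FTM_omega_def by blast
lemma count: "\<exists>w f. m_omega mem w \<and> m_fun mem f \<and> m_injective mem f \<and> m_dom mem f X \<and>
               (\<forall>y. (\<exists>x. m_edge mem f x y) \<longrightarrow> mem y w)"
  using Z unfolding Z_FTM_omega_def by blast

lemma union2_ex: "\<exists>u. \<forall>y. mem y u \<longleftrightarrow> mem y a \<or> mem y b"
proof -
  obtain z where z: "m_upair mem z a b" using upair_ex by blast
  obtain u where u: "\<forall>y. mem y u \<longleftrightarrow> (\<exists>x. mem x z \<and> mem y x)" using union_ex by blast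
  show ?thesis using z u by (auto simp: m_upair_def)
qed

lemma succ_ex: "\<exists>s. m_succ mem s x"
proof -
  obtain z where z: "m_upair mem z x x" using upair_ex by blast
  obtain u where u: "\<forall>y. mem y u \<longleftrightarrow> mem y x \<or> mem y z" using union2_ex by blast
  show ?thesis using z u by (auto simp: m_upair_def m_succ_def)
qed

lemma empty_ex: "\<exists>e. m_empty mem e"
proof -
  obtain b where "\<forall>y. mem y b \<longleftrightarrow> mem y a \<and> False"
    using sep[of "\<lambda>_. a" 0 "FNeg (FEq 0 0)" "\<lambda>_. False"] by force
  thus ?thesis by (auto simp: m_empty_def)
qed

lemma empty_unique: "m_empty mem x \<Longrightarrow> m_empty mem y \<Longrightarrow> x = y"
  by (rule ext) (auto simp: m_empty_def)
lemma succ_unique: "m_succ mem s x \<Longrightarrow> m_succ mem t x \<Longrightarrow> s = t"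
  by (rule ext) (auto simp: m_succ_def)
lemma upair_unique: "m_upair mem s a b \<Longrightarrow> m_upair mem t a b \<Longrightarrow> s = t"
  by (rule ext) (auto simp: m_upair_def)
lemma pair_unique: "m_pair mem s a b \<Longrightarrow> m_pair mem t a b \<Longrightarrow> s = t"
  by (rule ext) (auto simp: m_pair_def)

lemma pair_ex: "\<exists>p. m_pair mem p a b"
proof -
  obtain u1 where u1: "m_upair mem u1 a a" using upair_ex by blast
  obtain u2 where u2: "m_upair mem u2 a b" using upair_ex by blast
  obtain p where p: "m_upair mem p u1 u2" using upair_ex by blast
  have "m_pair mem p a b" unfolding m_pair_def
  proof
    fix w show "mem w p = (m_upair mem w a a \<or> m_upair mem w a b)"
      using p u1 u2 upair_unique unfolding m_upair_def[of mem p] by metis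
  qed
  thus ?thesis by blast
qed

lemma pair_inj: assumes "m_pair mem p a b" "m_pair mem p a' b'" shows "a = a' \<and> b = b'"
proof -
  obtain u1 where u1: "m_upair mem u1 a a" using upair_ex by blast
  obtain u2 where u2: "m_upair mem u2 a b" using upair_ex by blast
  have "mem u1 p" using assms(1) u1 by (auto simp: m_pair_def)
  hence "m_upair mem u1 a' a' \<or> m_upair mem u1 a' b'" using assms(2) by (auto simp: m_pair_def)
  hence aa: "a' = a" using u1 by (auto simp: m_upair_def)
  obtain v2 where v2: "m_upair mem v2 a b'" using upair_ex by blast
  have "mem u2 p" using assms(1) u2 by (auto simp: m_pair_def)
  hence A: "m_upair mem u2 a a \<or> m_upair mem u2 a b'" using assms(2) aa by (auto simp: m_pair_def)
  have "mem v2 p" using assms(2) v2 aa by (auto simp: m_pair_def)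
  hence B: "m_upair mem v2 a a \<or> m_upair mem v2 a b" using assms(1) by (auto simp: m_pair_def)
  have "b = b'"
  proof (cases "b = a")
    case True
    with B v2 show ?thesis unfolding m_upair_def by metis
  next
    case False
    with A u2 show ?thesis unfolding m_upair_def by metis
  qed
  with aa show ?thesis by simp
qed

lemma edge_pairI: "m_pair mem p a b \<Longrightarrow> mem p X \<Longrightarrow> m_edge mem X a b"
  by (auto simp: m_edge_def)

end


definition "fm_ind z e x s t = FAnd (FEx e (FAnd (FMem e z) (fm_empty e t)))
   (FAll x (FImp (FMem x z) (FEx s (FAnd (FMem s z) (fm_succ s x t)))))"

lemma sat_ind[simp]: "e \<noteq> z \<Longrightarrow> t \<noteq> e \<Longrightarrow> x \<noteq> z \<Longrightarrow> s \<noteq> z \<Longrightarrow> s \<noteq> x \<Longrightarrow> t \<noteq> s \<Longrightarrow> t \<noteq> x \<Longrightarrow>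
  sat mem env (fm_ind z e x s t) = m_inductive mem (env z)"
  by (simp add: fm_ind_def m_inductive_def)

context zm begin

lemma omega_ex: "\<exists>w. m_omega mem w"
proof -
  obtain w0 where w0: "m_inductive mem w0" using inf_ex by blast
  have "\<exists>w. \<forall>y. mem y w \<longleftrightarrow> mem y w0 \<and> (\<forall>z. m_inductive mem z \<longrightarrow> mem y z)"
    by (rule sep[of "\<lambda>_. w0" 0 "FAll 1 (FImp (fm_ind 1 2 3 4 5) (FMem 0 1))"]) simp
  then obtain w where w: "\<forall>y. mem y w \<longleftrightarrow> mem y w0 \<and> (\<forall>z. m_inductive mem z \<longrightarrow> mem y z)"
    by blast
  have "m_inductive mem w"
    unfolding m_inductive_def
  proof
    obtain e where e: "mem e w0" "m_empty mem e" using w0 unfolding m_inductive_def by blast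
    have "\<forall>z. m_inductive mem z \<longrightarrow> mem e z"
      using e(2) empty_unique unfolding m_inductive_def by blast
    thus "\<exists>e. mem e w \<and> m_empty mem e" using e w by blast
    show "\<forall>x. mem x w \<longrightarrow> (\<exists>s. mem s w \<and> m_succ mem s x)"
    proof (intro allI impI)
      fix x assume x: "mem x w"
      then obtain s where s: "mem s w0" "m_succ mem s x" using w w0 unfolding m_inductive_def by blast
      have "\<forall>z. m_inductive mem z \<longrightarrow> mem s z"
      proof (intro allI impI)
        fix z assume z: "m_inductive mem z"
        have "mem x z" using x w z by blast
        then obtain s' where "mem s' z" "m_succ mem s' x" using z unfolding m_inductive_def by blast
        thus "mem s z" using s(2) succ_unique by blast
      qed
      thus "\<exists>s. mem s w \<and> m_succ mem s x" using s w by blast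
    qed
  qed
  moreover have "\<forall>z. m_inductive mem z \<longrightarrow> m_subset mem w z" using w by (auto simp: m_subset_def)
  ultimately show ?thesis unfolding m_omega_def by blast
qed

lemma omega_unique: assumes "m_omega mem w" "m_omega mem w'" shows "w = w'"
proof -
  have "m_subset mem w w'" "m_subset mem w' w" using assms unfolding m_omega_def by blast+
  thus ?thesis unfolding m_subset_def by (intro ext) blast
qed

lemma om_zero: assumes "m_omega mem w" "m_empty mem e" shows "mem e w"
proof -
  obtain e' where "mem e' w" "m_empty mem e'" using assms(1) unfolding m_omega_def m_inductive_def by blast
  thus ?thesis using empty_unique[OF assms(2)] by metis
qed

lemma om_succ: assumes "m_omega mem w" "mem x w" "m_succ mem s x" shows "mem s w"
proof -
  have "\<forall>x. mem x w \<longrightarrow> (\<exists>s. mem s w \<and> m_succ mem s x)"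
    using assms(1) unfolding m_omega_def m_inductive_def by blast
  then obtain s' where "mem s' w" "m_succ mem s' x" using assms(2) by blast
  thus ?thesis using succ_unique[OF assms(3)] by metis
qed

lemma om_succ_ex: "m_omega mem w \<Longrightarrow> mem x w \<Longrightarrow> \<exists>s. mem s w \<and> m_succ mem s x"
  using om_succ succ_ex by blast

lemma om_ind:
  assumes w: "m_omega mem w" and d: "\<And>y. sat mem (env(i:=y)) \<phi> = P y"
    and z: "\<And>e. m_empty mem e \<Longrightarrow> P e"
    and s: "\<And>x s. mem x w \<Longrightarrow> P x \<Longrightarrow> m_succ mem s x \<Longrightarrow> P s"
    and n: "mem n w"
  shows "P n"
proof -
  obtain b where b: "\<forall>y. mem y b \<longleftrightarrow> mem y w \<and> P y" using sep[OF d] by blast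
  have "m_inductive mem b" unfolding m_inductive_def
  proof
    obtain e where "m_empty mem e" using empty_ex by blast
    thus "\<exists>e. mem e b \<and> m_empty mem e" using b z om_zero[OF w] by blast
    show "\<forall>x. mem x b \<longrightarrow> (\<exists>s. mem s b \<and> m_succ mem s x)"
    proof (intro allI impI)
      fix x assume x: "mem x b"
      then obtain t where t: "mem t w" "m_succ mem t x" using b om_succ_ex[OF w] by blast
      have "P t" using s[of x t] x b t by blast
      thus "\<exists>s. mem s b \<and> m_succ mem s x" using t b by blast
    qed
  qed
  hence "m_subset mem w b" using w unfolding m_omega_def by blast
  thus ?thesis using n b unfolding m_subset_def by blast
qed

lemma om_trans: assumes w: "m_omega mem w" and n: "mem n w" shows "mem m n \<Longrightarrow> mem m w"
proof -
  have "\<forall>m. mem m n \<longrightarrow> mem m w"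
    apply (rule om_ind[OF w, of "\<lambda>_. w" 0 "FAll 2 (FImp (FMem 2 0) (FMem 2 1))" "\<lambda>n. \<forall>m. mem m n \<longrightarrow> mem m w" n])
    subgoal by simp
    subgoal by (simp add: m_empty_def)
    subgoal by (simp add: m_succ_def; blast?)
    subgoal by (fact n)
    done
  thus "mem m n \<Longrightarrow> mem m w" by blast
qed

lemma om_elem_trans: assumes w: "m_omega mem w" and n: "mem n w" shows "m_transitive mem n"
proof -
  have "\<forall>a b. mem a b \<longrightarrow> mem b n \<longrightarrow> mem a n"
    apply (rule om_ind[OF w, of "\<lambda>_. w" 0 "FAll 1 (FAll 2 (FImp (FMem 1 2) (FImp (FMem 2 0) (FMem 1 0))))" "\<lambda>n. \<forall>a b. mem a b \<longrightarrow> mem b n \<longrightarrow> mem a n" n])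
    subgoal by simp
    subgoal by (simp add: m_empty_def)
    subgoal for x s
      unfolding m_succ_def by metis
    subgoal by (fact n)
    done
  thus ?thesis unfolding m_transitive_def by blast
qed

lemma om_cases: assumes w: "m_omega mem w" and n: "mem n w"
  shows "m_empty mem n \<or> (\<exists>m. mem m w \<and> m_succ mem n m)"
  apply (rule om_ind[OF w, of "\<lambda>_. w" 0 "FOr (fm_empty 0 2) (FEx 2 (FAnd (FMem 2 1) (fm_succ 0 2 3)))" "\<lambda>n. m_empty mem n \<or> (\<exists>m. mem m w \<and> m_succ mem n m)" n])
  subgoal by simp
  subgoal by simp
  subgoal by blast
  subgoal by (fact n)
  done

lemma om_zero_in: assumes w: "m_omega mem w" and n: "mem n w"
  shows "m_empty mem n \<or> (\<exists>e. mem e n \<and> m_empty mem e)"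
  apply (rule om_ind[OF w, of "\<lambda>_. w" 0 "FOr (fm_empty 0 2) (FEx 2 (FAnd (FMem 2 0) (fm_empty 2 3)))" "\<lambda>n. m_empty mem n \<or> (\<exists>e. mem e n \<and> m_empty mem e)" n])
  subgoal by simp
  subgoal by simp
  subgoal by (simp add: m_succ_def; blast?)
  subgoal by (fact n)
  done

lemma om_succ_mono: assumes w: "m_omega mem w" and n: "mem n w"
  shows "mem i n \<Longrightarrow> m_succ mem s i \<Longrightarrow> m_succ mem t n \<Longrightarrow> mem s t"
proof -
  have "\<forall>i s t. mem i n \<longrightarrow> m_succ mem s i \<longrightarrow> m_succ mem t n \<longrightarrow> mem s t"
    apply (rule om_ind[OF w, of "\<lambda>_. w" 0 "FAll 1 (FAll 2 (FAll 3 (FImp (FMem 1 0) (FImp (fm_succ 2 1 4) (FImp (fm_succ 3 0 4) (FMem 2 3))))))" "\<lambda>n. \<forall>i s t. mem i n \<longrightarrow> m_succ mem s i \<longrightarrow> m_succ mem t n \<longrightarrow> mem s t" n])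
    subgoal by simp
    subgoal by (simp add: m_empty_def)
    subgoal for x s
    proof (intro allI impI)
      fix i s' t
      assume IH: "\<forall>i s t. mem i x \<longrightarrow> m_succ mem s i \<longrightarrow> m_succ mem t x \<longrightarrow> mem s t"
        and sx: "m_succ mem s x" and i: "mem i s" and s': "m_succ mem s' i" and t: "m_succ mem t s"
      from i sx have "mem i x \<or> i = x" by (simp add: m_succ_def)
      thus "mem s' t"
      proof
        assume "mem i x"
        hence "mem s' s" using IH s' sx by blast
        thus ?thesis using t by (simp add: m_succ_def)
      next
        assume "i = x"
        hence "s' = s" using s' sx succ_unique by blast
        thus ?thesis using t by (simp add: m_succ_def)
      qed
    qed
    subgoal by (fact n)
    done
  thus "mem i n \<Longrightarrow> m_succ mem s i \<Longrightarrow> m_succ mem t n \<Longrightarrow> mem s t" by blast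
qed

lemma succ_inj: assumes "m_succ mem s a" "m_succ mem s b" shows "a = b"
proof (rule ccontr)
  assume ne: "a \<noteq> b"
  have ab: "mem a b" "mem b a" using assms ne unfolding m_succ_def by blast+
  obtain u where u: "m_upair mem u a b" using upair_ex by blast
  have "mem a u" using u by (simp add: m_upair_def)
  then obtain y where "mem y u" "\<forall>z. mem z y \<longrightarrow> \<not> mem z u" using reg by blast
  thus False using u ab by (auto simp: m_upair_def)
qed

lemma not_self: "\<not> mem x x"
proof
  assume xx: "mem x x"
  obtain u where u: "m_upair mem u x x" using upair_ex by blast
  have "mem x u" using u by (simp add: m_upair_def)
  then obtain y where "mem y u" "\<forall>z. mem z y \<longrightarrow> \<not> mem z u" using reg by blast
  thus False using u xx by (auto simp: m_upair_def)
qed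

lemma succ_nonempty: "m_succ mem s x \<Longrightarrow> m_empty mem s \<Longrightarrow> False"
  by (auto simp: m_succ_def m_empty_def)

end


context zm begin

lemma edge_upair2:
  assumes "m_upair mem g p q" "m_pair mem p x1 y1" "m_pair mem q x2 y2"
  shows "m_edge mem g x y \<longleftrightarrow> (x = x1 \<and> y = y1) \<or> (x = x2 \<and> y = y2)"
proof
  assume "m_edge mem g x y"
  then obtain r where r: "mem r g" "m_pair mem r x y" by (auto simp: m_edge_def)
  hence "r = p \<or> r = q" using assms(1) by (auto simp: m_upair_def)
  thus "(x = x1 \<and> y = y1) \<or> (x = x2 \<and> y = y2)" using r(2) assms(2,3) pair_inj by blast
next
  assume "(x = x1 \<and> y = y1) \<or> (x = x2 \<and> y = y2)"
  thus "m_edge mem g x y" using assms by (auto simp: m_edge_def m_upair_def)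
qed

lemma rel_upair2:
  assumes "m_upair mem g p q" "m_pair mem p x1 y1" "m_pair mem q x2 y2"
  shows "m_rel mem g"
  using assms by (auto simp: m_rel_def m_upair_def)

lemma fin_upair: assumes z: "m_upair mem z a b" shows "m_finite mem z"
proof -
  obtain w where w: "m_omega mem w" using omega_ex by blast
  obtain e where e: "m_empty mem e" using empty_ex by blast
  obtain o1 where o1: "m_succ mem o1 e" using succ_ex by blast
  obtain o2 where o2: "m_succ mem o2 o1" using succ_ex by blast
  have ew: "mem e w" using om_zero[OF w e] .
  have o1w: "mem o1 w" using om_succ[OF w ew o1] .
  have o2w: "mem o2 w" using om_succ[OF w o1w o2] .
  have ne: "o1 \<noteq> e" using o1 e by (auto simp: m_succ_def m_empty_def)
  obtain p0 where p0: "m_pair mem p0 e a" using pair_ex by blast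
  obtain p1 where p1: "m_pair mem p1 o1 b" using pair_ex by blast
  show ?thesis
  proof (cases "a = b")
    case True
    obtain g where g: "m_upair mem g p0 p0" using upair_ex by blast
    note E = edge_upair2[OF g p0 p0]
    have "m_fun mem g" unfolding m_fun_def using rel_upair2[OF g p0 p0] E by simp
    moreover have "m_injective mem g" unfolding m_injective_def using E by simp
    moreover have "m_dom mem g o1" unfolding m_dom_def using E o1 e by (auto simp: m_succ_def m_empty_def)
    moreover have "m_ran mem g z" unfolding m_ran_def using E z True by (auto simp: m_upair_def)
    ultimately show ?thesis unfolding m_finite_def using w o1w by blast
  next
    case False
    obtain g where g: "m_upair mem g p0 p1" using upair_ex by blast
    note E = edge_upair2[OF g p0 p1]
    have "m_fun mem g" unfolding m_fun_def using rel_upair2[OF g p0 p1] E ne by auto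
    moreover have "m_injective mem g" unfolding m_injective_def using E False by auto
    moreover have "m_dom mem g o2" unfolding m_dom_def using E o1 o2 e
      by (auto simp: m_succ_def m_empty_def)
    moreover have "m_ran mem g z" unfolding m_ran_def using E z by (auto simp: m_upair_def)
    ultimately show ?thesis unfolding m_finite_def using w o2w by blast
  qed
qed

lemma pair_is_upair: assumes "m_pair mem p a b" "m_upair mem u1 a a" "m_upair mem u2 a b"
  shows "m_upair mem p u1 u2"
  using assms upair_unique unfolding m_pair_def m_upair_def[of mem p] by metis

lemma pairclosed: "\<exists>W. m_subset mem U W \<and> (\<forall>a b p. mem a W \<longrightarrow> mem b W \<longrightarrow> m_pair mem p a b \<longrightarrow> mem p W)"
proof -
  obtain Y where Y: "m_subset mem U Y" "\<forall>F. m_subset mem F Y \<and> m_finite mem F \<longrightarrow> mem F Y"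
    using fc by blast
  have up: "mem z Y" if "mem a Y" "mem b Y" "m_upair mem z a b" for a b z
  proof -
    have "m_subset mem z Y" using that by (auto simp: m_subset_def m_upair_def)
    thus ?thesis using Y(2) fin_upair[OF that(3)] by blast
  qed
  have "mem p Y" if "mem a Y" "mem b Y" "m_pair mem p a b" for a b p
  proof -
    obtain u1 where u1: "m_upair mem u1 a a" using upair_ex by blast
    obtain u2 where u2: "m_upair mem u2 a b" using upair_ex by blast
    show ?thesis using up[OF up[OF that(1,1) u1] up[OF that(1,2) u2] pair_is_upair[OF that(3) u1 u2]] .
  qed
  thus ?thesis using Y(1) by blast
qed

end


locale cons = zm +
  fixes X x0 T S w f W A
  assumes x0: "mem x0 X"
  and T_tr: "m_transitive mem T" and XT: "mem X T"
  and S_def: "\<And>y. mem y S \<longleftrightarrow> mem y T \<and> (\<forall>Z. mem X Z \<and> (\<forall>a b. mem a Z \<longrightarrow> mem b a \<longrightarrow> mem b Z) \<longrightarrow> mem y Z)"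
  and w: "m_omega mem w"
  and f_fun: "m_fun mem f" and f_inj: "m_injective mem f" and f_dom: "m_dom mem f S"
  and f_w: "\<And>x y. m_edge mem f x y \<Longrightarrow> mem y w"
  and Ww: "\<And>y. mem y w \<Longrightarrow> mem y W" and WS: "\<And>y. mem y S \<Longrightarrow> mem y W"
  and Wp: "\<And>a b p. mem a W \<Longrightarrow> mem b W \<Longrightarrow> m_pair mem p a b \<Longrightarrow> mem p W"
  and A_def: "\<And>p. mem p A \<longleftrightarrow> mem p W \<and> (\<exists>a b fa fb. mem a S \<and> mem b S \<and> mem a b \<and>
       m_edge mem f a fa \<and> m_edge mem f b fb \<and> m_pair mem p fa fb)"
begin

lemma S_closed: assumes "mem a S" "mem b a" shows "mem b S"
proof -
  have "mem a T" using assms(1) S_def by blast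
  hence bT: "mem b T" using T_tr assms(2) unfolding m_transitive_def by blast
  have "\<forall>Z. mem X Z \<and> (\<forall>a b. mem a Z \<longrightarrow> mem b a \<longrightarrow> mem b Z) \<longrightarrow> mem b Z"
  proof (intro allI impI)
    fix Z assume Z: "mem X Z \<and> (\<forall>a b. mem a Z \<longrightarrow> mem b a \<longrightarrow> mem b Z)"
    hence "mem a Z" using assms(1) S_def by blast
    thus "mem b Z" using Z assms(2) by blast
  qed
  thus ?thesis using bT S_def by blast
qed

lemma X_S: "mem X S"
  using S_def XT by blast

lemma S_ind: assumes "mem X Z" "\<And>a b. mem a Z \<Longrightarrow> mem b a \<Longrightarrow> mem b Z" "mem y S" shows "mem y Z"
  using assms S_def by blast

lemma f_total: "mem a S \<Longrightarrow> \<exists>fa. m_edge mem f a fa"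
  using f_dom unfolding m_dom_def by blast
lemma f_S: "m_edge mem f a fa \<Longrightarrow> mem a S"
  using f_dom unfolding m_dom_def by blast
lemma f_single: "m_edge mem f a x \<Longrightarrow> m_edge mem f a y \<Longrightarrow> x = y"
  using f_fun unfolding m_fun_def by blast
lemma f_injD: "m_edge mem f a x \<Longrightarrow> m_edge mem f b x \<Longrightarrow> a = b"
  using f_inj unfolding m_injective_def by blast

lemma A_edge: "m_edge mem A x y \<longleftrightarrow> (\<exists>a b. mem a S \<and> mem b S \<and> mem a b \<and> m_edge mem f a x \<and> m_edge mem f b y)"
proof
  assume "m_edge mem A x y"
  then obtain p where p: "mem p A" "m_pair mem p x y" unfolding m_edge_def by blast
  then obtain a b fa fb where ab: "mem a S" "mem b S" "mem a b" "m_edge mem f a fa" "m_edge mem f b fb" "m_pair mem p fa fb"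
    using A_def by blast
  have "fa = x" "fb = y" using pair_inj[OF ab(6) p(2)] by auto
  thus "\<exists>a b. mem a S \<and> mem b S \<and> mem a b \<and> m_edge mem f a x \<and> m_edge mem f b y" using ab by blast
next
  assume "\<exists>a b. mem a S \<and> mem b S \<and> mem a b \<and> m_edge mem f a x \<and> m_edge mem f b y"
  then obtain a b where ab: "mem a S" "mem b S" "mem a b" "m_edge mem f a x" "m_edge mem f b y" by blast
  obtain p where p: "m_pair mem p x y" using pair_ex by blast
  have "mem p W" using Wp[OF Ww[OF f_w[OF ab(4)]] Ww[OF f_w[OF ab(5)]] p] .
  hence "mem p A" using A_def ab p by blast
  thus "m_edge mem A x y" using p unfolding m_edge_def by blast
qed

lemma A_rel: "mem p A \<Longrightarrow> \<exists>a b. mem a w \<and> mem b w \<and> m_pair mem p a b"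
  using A_def f_w by blast

lemma fld_A: "m_fld mem A x \<Longrightarrow> \<exists>a. mem a S \<and> m_edge mem f a x"
  unfolding m_fld_def using A_edge by blast

lemma fld_w: "m_fld mem A x \<Longrightarrow> mem x w"
  using fld_A f_w by blast

lemma fld_W: "m_fld mem A x \<Longrightarrow> mem x W"
  using fld_w Ww by blast

lemma A_wf: "m_wf mem A"
  unfolding m_wf_def
proof (intro allI impI)
  fix S' assume "(\<exists>x. mem x S') \<and> (\<forall>x. mem x S' \<longrightarrow> m_fld mem A x)"
  then obtain x where x: "mem x S'" and Sf: "\<And>x. mem x S' \<Longrightarrow> m_fld mem A x" by blast
  have "\<exists>B. \<forall>y. mem y B \<longleftrightarrow> mem y S \<and> (\<exists>fy. m_edge mem f y fy \<and> mem fy S')"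
    by (rule sep[of "\<lambda>k. if k = 2 then f else S'" 0 "FEx 1 (FAnd (fm_edge 2 0 1 4 5 6) (FMem 1 3))"]) simp
  then obtain B where B: "\<And>y. mem y B \<longleftrightarrow> mem y S \<and> (\<exists>fy. m_edge mem f y fy \<and> mem fy S')" by blast
  obtain a where a: "mem a S" "m_edge mem f a x" using fld_A[OF Sf[OF x]] by blast
  have "mem a B" using B a x by blast
  then obtain y0 where y0: "mem y0 B" "\<And>z. mem z y0 \<Longrightarrow> \<not> mem z B" using reg by blast
  then obtain fy where fy: "m_edge mem f y0 fy" "mem fy S'" using B by blast
  have "\<forall>j. mem j S' \<longrightarrow> \<not> m_edge mem A j fy"
  proof (intro allI impI notI)
    fix j assume j: "mem j S'" "m_edge mem A j fy"
    then obtain a' b' where ab: "mem a' S" "mem b' S" "mem a' b'" "m_edge mem f a' j" "m_edge mem f b' fy"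
      using A_edge by blast
    have "b' = y0" using f_injD[OF ab(5) fy(1)] .
    moreover have "mem a' B" using B ab j by blast
    ultimately show False using y0(2) ab(3) by blast
  qed
  thus "\<exists>a. mem a S' \<and> (\<forall>j. mem j S' \<longrightarrow> \<not> m_edge mem A j a)" using fy by blast
qed

lemma A_ext: "m_extensional mem A"
  unfolding m_extensional_def
proof (intro allI impI)
  fix u v assume H: "m_fld mem A u \<and> m_fld mem A v \<and> (\<forall>j. m_edge mem A j u = m_edge mem A j v)"
  obtain a where a: "mem a S" "m_edge mem f a u" using fld_A H by blast
  obtain b where b: "mem b S" "m_edge mem f b v" using fld_A H by blast
  have sub: "mem z b'" if "mem z a'" "mem a' S" "m_edge mem f a' u'" "mem b' S" "m_edge mem f b' v'"
      "\<forall>j. m_edge mem A j u' = m_edge mem A j v'" for z a' b' u' v'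
  proof -
    have zS: "mem z S" using S_closed that by blast
    obtain fz where fz: "m_edge mem f z fz" using f_total[OF zS] by blast
    have "m_edge mem A fz u'" using A_edge zS that fz by blast
    hence "m_edge mem A fz v'" using that by blast
    then obtain a'' b'' where ab: "mem a'' S" "mem b'' S" "mem a'' b''" "m_edge mem f a'' fz" "m_edge mem f b'' v'"
      using A_edge by blast
    have "a'' = z" using f_injD[OF ab(4) fz] .
    moreover have "b'' = b'" using f_injD[OF ab(5) that(5)] .
    ultimately show ?thesis using ab(3) by simp
  qed
  have "a = b"
  proof (rule ext)
    fix z show "mem z a = mem z b"
      using sub[OF _ a b] sub[OF _ b a] H by metis
  qed
  thus "u = v" using a b f_single by blast
qed

end


context cons begin

definition chd where "chd K K1 c e j v \<longleftrightarrow> mem K w \<and> m_succ mem K1 K \<and> m_empty mem e \<and> m_fun mem c \<and>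
   m_dom mem c K1 \<and> m_edge mem c e j \<and> m_edge mem c K v \<and>
   (\<forall>i i1 a b. mem i K \<and> m_succ mem i1 i \<and> m_edge mem c i a \<and> m_edge mem c i1 b \<longrightarrow> m_edge mem A a b)"

definition ch where "ch j v \<longleftrightarrow> (\<exists>K K1 c e. chd K K1 c e j v)"

lemma ch_m_chain: "ch j v \<longleftrightarrow> m_chain mem A j v"
proof
  assume "ch j v" thus "m_chain mem A j v" unfolding ch_def chd_def m_chain_def using w by blast
next
  assume "m_chain mem A j v"
  then obtain w' K K1 c e where H: "m_omega mem w'" "mem K w'" "m_succ mem K1 K" "m_empty mem e"
        "m_fun mem c" "m_dom mem c K1" "m_edge mem c e j" "m_edge mem c K v"
        "\<forall>i i1 a b. mem i K \<and> m_succ mem i1 i \<and> m_edge mem c i a \<and> m_edge mem c i1 b \<longrightarrow> m_edge mem A a b"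
    unfolding m_chain_def by blast
  have "w' = w" using omega_unique[OF H(1) w] .
  thus "ch j v" unfolding ch_def chd_def using H by blast
qed

lemma c_single: "m_fun mem c \<Longrightarrow> m_edge mem c x a \<Longrightarrow> m_edge mem c x b \<Longrightarrow> a = b"
  unfolding m_fun_def by blast

lemma step_back:
  assumes C: "chd K K1 c e j v" and ia: "m_edge mem c i a"
  shows "(i = e \<and> a = j) \<or> (\<exists>i0 b. mem i0 K \<and> m_succ mem i i0 \<and> m_edge mem c i0 b \<and> m_edge mem A b a)"
proof -
  have Kw: "mem K w" and K1: "m_succ mem K1 K" and e: "m_empty mem e" and cf: "m_fun mem c"
    and cd: "m_dom mem c K1" and ce: "m_edge mem c e j"
    and cc: "\<forall>i i1 a b. mem i K \<and> m_succ mem i1 i \<and> m_edge mem c i a \<and> m_edge mem c i1 b \<longrightarrow> m_edge mem A a b"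
    using C unfolding chd_def by blast+
  have K1w: "mem K1 w" using om_succ[OF w Kw K1] .
  have iK1: "mem i K1" using cd ia unfolding m_dom_def by blast
  have iw: "mem i w" using om_trans[OF w K1w iK1] .
  from om_cases[OF w iw] show ?thesis
  proof
    assume "m_empty mem i"
    hence "i = e" using empty_unique e by blast
    thus ?thesis using c_single[OF cf ia] ce by blast
  next
    assume "\<exists>m. mem m w \<and> m_succ mem i m"
    then obtain i0 where i0: "mem i0 w" "m_succ mem i i0" by blast
    have "mem i K \<or> i = K" using iK1 K1 unfolding m_succ_def by blast
    moreover have "mem i0 i" using i0(2) unfolding m_succ_def by blast
    ultimately have i0K: "mem i0 K" using om_elem_trans[OF w Kw] unfolding m_transitive_def by blast
    have "mem i0 K1" using i0K K1 unfolding m_succ_def by blast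
    then obtain b where b: "m_edge mem c i0 b" using cd unfolding m_dom_def by blast
    have "m_edge mem A b a" using cc i0K i0(2) b ia by blast
    thus ?thesis using i0K i0(2) b by blast
  qed
qed

lemma fld_edge1: "m_edge mem A b a \<Longrightarrow> m_fld mem A a" unfolding m_fld_def by blast
lemma fld_edge2: "m_edge mem A a b \<Longrightarrow> m_fld mem A a" unfolding m_fld_def by blast

lemma vals_fld: assumes "chd K K1 c e j v" "m_fld mem A j" "m_edge mem c i a" shows "m_fld mem A a"
  using step_back[OF assms(1,3)] assms(2) fld_edge1 by blast

lemma ch_refl: "ch j j"
proof -
  obtain e where e: "m_empty mem e" using empty_ex by blast
  obtain o1 where o1: "m_succ mem o1 e" using succ_ex by blast
  obtain p where p: "m_pair mem p e j" using pair_ex by blast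
  obtain c where c: "m_upair mem c p p" using upair_ex by blast
  note E = edge_upair2[OF c p p]
  have "m_fun mem c" unfolding m_fun_def using rel_upair2[OF c p p] E by simp
  moreover have "m_dom mem c o1" unfolding m_dom_def using E o1 e by (auto simp: m_succ_def m_empty_def)
  moreover have "mem e w" using om_zero[OF w e] .
  ultimately have "chd e o1 c e j j" unfolding chd_def using e o1 E by (auto simp: m_empty_def)
  thus ?thesis unfolding ch_def by blast
qed

end


context cons begin

lemma ch_prepend: assumes "ch j v" and zj: "m_edge mem A z j" shows "ch z v"
proof -
  obtain K K1 c e where C: "chd K K1 c e j v" using assms(1) unfolding ch_def by blast
  have Kw: "mem K w" and K1: "m_succ mem K1 K" and e: "m_empty mem e" and cf: "m_fun mem c"
    and cd: "m_dom mem c K1" and ce: "m_edge mem c e j" and cK: "m_edge mem c K v"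
    and cc: "\<forall>i i1 a b. mem i K \<and> m_succ mem i1 i \<and> m_edge mem c i a \<and> m_edge mem c i1 b \<longrightarrow> m_edge mem A a b"
    using C unfolding chd_def by blast+
  have K1w: "mem K1 w" using om_succ[OF w Kw K1] .
  obtain K1' where K1': "m_succ mem K1' K1" using succ_ex by blast
  have K1'w: "mem K1' w" using om_succ[OF w K1w K1'] .
  have jf: "m_fld mem A j" using fld_edge1[OF zj] .
  have valW: "mem a W" if "m_edge mem c i a" for i a using fld_W[OF vals_fld[OF C jf that]] .
  have domK1: "mem i K1" if "m_edge mem c i a" for i a using cd that unfolding m_dom_def by blast
  have "\<exists>B. \<forall>y. mem y B \<longleftrightarrow> mem y W \<and> (\<exists>i a s. m_edge mem c i a \<and> m_succ mem s i \<and> m_pair mem y s a)"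
    by (rule sep[of "\<lambda>k. c" 0 "FEx 1 (FEx 2 (FEx 3 (FAnd (fm_edge 4 1 2 5 6 7) (FAnd (fm_succ 3 1 5) (fm_pair 0 3 2 5 6)))))"]) simp
  then obtain B where B: "\<And>y. mem y B \<longleftrightarrow> mem y W \<and> (\<exists>i a s. m_edge mem c i a \<and> m_succ mem s i \<and> m_pair mem y s a)"
    by blast
  obtain p0 where p0: "m_pair mem p0 e z" using pair_ex by blast
  obtain P1 where P1: "m_upair mem P1 p0 p0" using upair_ex by blast
  obtain c' where c': "\<And>y. mem y c' \<longleftrightarrow> mem y P1 \<or> mem y B" using union2_ex by blast
  have cedge: "m_edge mem c' x y \<longleftrightarrow> (x = e \<and> y = z) \<or> (\<exists>i. m_edge mem c i y \<and> m_succ mem x i)" for x y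
  proof
    assume "m_edge mem c' x y"
    then obtain q where q: "mem q c'" "m_pair mem q x y" unfolding m_edge_def by blast
    from q(1) c' have "mem q P1 \<or> mem q B" by blast
    thus "(x = e \<and> y = z) \<or> (\<exists>i. m_edge mem c i y \<and> m_succ mem x i)"
    proof
      assume "mem q P1" hence "q = p0" using P1 unfolding m_upair_def by blast
      thus ?thesis using pair_inj[OF p0] q(2) by blast
    next
      assume "mem q B"
      then obtain i a s where ias: "m_edge mem c i a" "m_succ mem s i" "m_pair mem q s a" using B by blast
      have "s = x \<and> a = y" using pair_inj[OF ias(3) q(2)] .
      thus ?thesis using ias by blast
    qed
  next
    assume "(x = e \<and> y = z) \<or> (\<exists>i. m_edge mem c i y \<and> m_succ mem x i)"
    thus "m_edge mem c' x y"
    proof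
      assume "x = e \<and> y = z"
      moreover have "mem p0 c'" using c' P1 unfolding m_upair_def by blast
      ultimately show ?thesis using p0 unfolding m_edge_def by blast
    next
      assume "\<exists>i. m_edge mem c i y \<and> m_succ mem x i"
      then obtain i where i: "m_edge mem c i y" "m_succ mem x i" by blast
      obtain q where q: "m_pair mem q x y" using pair_ex by blast
      have "mem i w" using om_trans[OF w K1w domK1[OF i(1)]] .
      hence "mem x w" using om_succ[OF w _ i(2)] by blast
      hence "mem q W" using Wp[OF Ww valW[OF i(1)] q] by blast
      hence "mem q B" using B i q by blast
      hence "mem q c'" using c' by blast
      thus ?thesis using q unfolding m_edge_def by blast
    qed
  qed
  have rel: "m_rel mem c'"
    unfolding m_rel_def
  proof (intro allI impI)
    fix q assume "mem q c'"
    hence "mem q P1 \<or> mem q B" using c' by blast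
    thus "\<exists>a b. m_pair mem q a b"
    proof
      assume "mem q P1" hence "q = p0" using P1 unfolding m_upair_def by blast
      thus ?thesis using p0 by blast
    next
      assume "mem q B" thus ?thesis using B by blast
    qed
  qed
  have cfn: "m_fun mem c'"
    unfolding m_fun_def
  proof (intro conjI rel allI impI)
    fix x y y' assume H: "m_edge mem c' x y \<and> m_edge mem c' x y'"
    have ne: "\<not> m_succ mem e i" for i using succ_nonempty e by blast
    from H cedge show "y = y'"
    proof -
      have h1: "(x = e \<and> y = z) \<or> (\<exists>i. m_edge mem c i y \<and> m_succ mem x i)" using H cedge by blast
      have h2: "(x = e \<and> y' = z) \<or> (\<exists>i. m_edge mem c i y' \<and> m_succ mem x i)" using H cedge by blast
      show ?thesis
      proof (cases "x = e")
        case True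
        thus ?thesis using h1 h2 ne by blast
      next
        case False
        then obtain i i' where "m_edge mem c i y" "m_succ mem x i" "m_edge mem c i' y'" "m_succ mem x i'"
          using h1 h2 by blast
        thus ?thesis using succ_inj c_single[OF cf] by metis
      qed
    qed
  qed
  have dom: "m_dom mem c' K1'"
    unfolding m_dom_def
  proof (intro allI iffI)
    fix x assume "\<exists>y. m_edge mem c' x y"
    then obtain y where "m_edge mem c' x y" by blast
    hence "(x = e \<and> y = z) \<or> (\<exists>i. m_edge mem c i y \<and> m_succ mem x i)" using cedge by blast
    thus "mem x K1'"
    proof
      assume "x = e \<and> y = z"
      have "\<not> m_empty mem K1'" using succ_nonempty K1' by blast
      then obtain e' where "mem e' K1'" "m_empty mem e'" using om_zero_in[OF w K1'w] by blast
      thus ?thesis using empty_unique e \<open>x = e \<and> y = z\<close> by blast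
    next
      assume "\<exists>i. m_edge mem c i y \<and> m_succ mem x i"
      then obtain i where i: "m_edge mem c i y" "m_succ mem x i" by blast
      show ?thesis using om_succ_mono[OF w K1w domK1[OF i(1)] i(2) K1'] .
    qed
  next
    fix x assume xK: "mem x K1'"
    hence "mem x K1 \<or> x = K1" using K1' unfolding m_succ_def by blast
    thus "\<exists>y. m_edge mem c' x y"
    proof
      assume xK1: "mem x K1"
      have xw: "mem x w" using om_trans[OF w K1w xK1] .
      from om_cases[OF w xw] show ?thesis
      proof
        assume "m_empty mem x" hence "x = e" using empty_unique e by blast
        thus ?thesis using cedge by blast
      next
        assume "\<exists>m. mem m w \<and> m_succ mem x m"
        then obtain m where m: "mem m w" "m_succ mem x m" by blast
        have "mem m x" using m(2) unfolding m_succ_def by blast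
        hence "mem m K1" using om_elem_trans[OF w K1w] xK1 unfolding m_transitive_def by blast
        then obtain y where "m_edge mem c m y" using cd unfolding m_dom_def by blast
        thus ?thesis using cedge m(2) by blast
      qed
    next
      assume "x = K1"
      thus ?thesis using cedge cK K1 by blast
    qed
  qed
  have cc': "\<forall>i i1 a b. mem i K1 \<and> m_succ mem i1 i \<and> m_edge mem c' i a \<and> m_edge mem c' i1 b \<longrightarrow> m_edge mem A a b"
  proof (intro allI impI)
    fix i i1 a b assume H: "mem i K1 \<and> m_succ mem i1 i \<and> m_edge mem c' i a \<and> m_edge mem c' i1 b"
    have "i1 \<noteq> e" using H succ_nonempty e by blast
    then obtain i' where i': "m_edge mem c i' b" "m_succ mem i1 i'" using H cedge by blast
    have "i' = i" using succ_inj i'(2) H by blast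
    hence ib: "m_edge mem c i b" using i' by simp
    have "(i = e \<and> a = z) \<or> (\<exists>i0. m_edge mem c i0 a \<and> m_succ mem i i0)" using H cedge by blast
    thus "m_edge mem A a b"
    proof
      assume "i = e \<and> a = z"
      hence "b = j" using c_single[OF cf ib] ce by blast
      thus ?thesis using zj \<open>i = e \<and> a = z\<close> by simp
    next
      assume "\<exists>i0. m_edge mem c i0 a \<and> m_succ mem i i0"
      then obtain i0 where i0: "m_edge mem c i0 a" "m_succ mem i i0" by blast
      have "mem i K \<or> i = K" using H K1 unfolding m_succ_def by blast
      moreover have "mem i0 i" using i0(2) unfolding m_succ_def by blast
      ultimately have "mem i0 K" using om_elem_trans[OF w Kw] unfolding m_transitive_def by blast
      thus ?thesis using cc i0 ib by blast
    qed
  qed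
  have "m_edge mem c' e z" using cedge by blast
  moreover have "m_edge mem c' K1 v" using cedge cK K1 by blast
  ultimately have "chd K1 K1' c' e z v" unfolding chd_def using K1w K1' e cfn dom cc' by blast
  thus ?thesis unfolding ch_def by blast
qed

end


definition "fm_rel c t a b u v = FAll t (FImp (FMem t c) (FEx a (FEx b (fm_pair t a b u v))))"
definition "fm_fun c x y y' q t u a b = FAnd (fm_rel c q a b t u)
   (FAll x (FAll y (FAll y' (FImp (FAnd (fm_edge c x y q t u) (fm_edge c x y' q t u)) (FEq y y')))))"
definition "fm_dom c K x y q t u = FAll x (FIff (FEx y (fm_edge c x y q t u)) (FMem x K))"

lemma sat_rel[simp]: "distinct [c,t,a,b,u,v] \<Longrightarrow> sat mem env (fm_rel c t a b u v) = m_rel mem (env c)"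
  by (clarsimp simp: fm_rel_def m_rel_def)
lemma sat_fun[simp]: "distinct [c,x,y,y',q,t,u,a,b] \<Longrightarrow> sat mem env (fm_fun c x y y' q t u a b) = m_fun mem (env c)"
  by (clarsimp simp: fm_fun_def m_fun_def)
lemma sat_dom[simp]: "distinct [c,K,x,y,q,t,u] \<Longrightarrow> sat mem env (fm_dom c K x y q t u) = m_dom mem (env c) (env K)"
  by (clarsimp simp: fm_dom_def m_dom_def)

context cons begin

lemma ch_range: assumes "ch j v" "m_fld mem A j"
  shows "\<exists>R. mem j R \<and> mem v R \<and> (\<forall>a. mem a R \<longrightarrow> a = j \<or> (\<exists>b. mem b R \<and> m_edge mem A b a))"
proof -
  obtain K K1 c e where C: "chd K K1 c e j v" using assms(1) unfolding ch_def by blast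
  have ce: "m_edge mem c e j" and cK: "m_edge mem c K v" using C unfolding chd_def by blast+
  have "\<exists>R. \<forall>y. mem y R \<longleftrightarrow> mem y W \<and> (\<exists>i. m_edge mem c i y)"
    by (rule sep[of "\<lambda>k. c" 0 "FEx 1 (fm_edge 2 1 0 3 4 5)"]) simp
  then obtain R where R: "\<And>y. mem y R \<longleftrightarrow> mem y W \<and> (\<exists>i. m_edge mem c i y)" by blast
  have inR: "mem y R" if "m_edge mem c i y" for i y
    using R that fld_W[OF vals_fld[OF C assms(2) that]] by blast
  have "\<forall>a. mem a R \<longrightarrow> a = j \<or> (\<exists>b. mem b R \<and> m_edge mem A b a)"
  proof (intro allI impI)
    fix a assume "mem a R"
    then obtain i where "m_edge mem c i a" using R by blast
    from step_back[OF C this] show "a = j \<or> (\<exists>b. mem b R \<and> m_edge mem A b a)" using inR by blast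
  qed
  thus ?thesis using inR[OF ce] inR[OF cK] by blast
qed

lemma all_chain: assumes fX: "m_edge mem f X fX" and a: "mem a S" and fa: "m_edge mem f a fa"
  shows "ch fa fX"
proof -
  have "\<exists>Zp. \<forall>y. mem y Zp \<longleftrightarrow> mem y S \<and> (\<exists>fy. m_edge mem f y fy \<and> ch fy fX)"
    apply (rule sep[of "\<lambda>k. if k = 1 then f else if k = 2 then w else if k = 3 then fX else A" 0
     "FEx 5 (FAnd (fm_edge 1 0 5 6 7 8) (FEx 6 (FEx 7 (FEx 8 (FEx 9 (FAnd (FMem 6 2) (FAnd (fm_succ 7 6 10) (FAnd (fm_empty 9 10) (FAnd (fm_fun 8 10 11 12 13 14 15 16 17) (FAnd (fm_dom 8 7 10 11 12 13 14) (FAnd (fm_edge 8 9 5 10 11 12) (FAnd (fm_edge 8 6 3 10 11 12) (FAll 10 (FAll 11 (FAll 12 (FAll 13 (FImp (FAnd (FMem 10 6) (FAnd (fm_succ 11 10 14) (FAnd (fm_edge 8 10 12 14 15 16) (fm_edge 8 11 13 14 15 16)))) (fm_edge 4 12 13 14 15 16))))))))))))))))))"])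
    by (simp add: ch_def chd_def)
  then obtain Zp where Zp: "\<And>y. mem y Zp \<longleftrightarrow> mem y S \<and> (\<exists>fy. m_edge mem f y fy \<and> ch fy fX)" by blast
  have "mem a Zp"
  proof (rule S_ind[OF _ _ a])
    show "mem X Zp" using Zp X_S fX ch_refl by blast
  next
    fix a' b assume H: "mem a' Zp" "mem b a'"
    then obtain fa' where fa': "m_edge mem f a' fa'" "ch fa' fX" "mem a' S" using Zp by blast
    have bS: "mem b S" using S_closed[OF fa'(3) H(2)] .
    obtain fb where fb: "m_edge mem f b fb" using f_total[OF bS] by blast
    have "m_edge mem A fb fa'" using A_edge bS fa' fb H(2) by blast
    hence "ch fb fX" using ch_prepend[OF fa'(2)] by blast
    thus "mem b Zp" using Zp bS fb by blast
  qed
  then obtain fy where "m_edge mem f a fy" "ch fy fX" using Zp by blast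
  thus ?thesis using f_single[OF fa] by metis
qed

end


context cons begin

lemma result: "\<exists>A w. m_omega mem w \<and>
           (\<forall>p. mem p A \<longrightarrow> (\<exists>a b. mem a w \<and> mem b w \<and> m_pair mem p a b)) \<and>
           m_wf mem A \<and> m_extensional mem A \<and> m_vertex_digraph mem A \<and>
           (\<exists>v Y eta. m_ver mem A v \<and> m_collapse mem A Y eta \<and> m_val mem eta v X)"
proof -
  obtain fX where fX: "m_edge mem f X fX" using f_total[OF X_S] by blast
  have x0S: "mem x0 S" using S_closed[OF X_S x0] .
  obtain fx0 where fx0: "m_edge mem f x0 fx0" using f_total[OF x0S] by blast
  have e0: "m_edge mem A fx0 fX" using A_edge x0S X_S x0 fx0 fX by blast
  have fXfld: "m_fld mem A fX" using fld_edge1[OF e0] .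
  have chains: "ch j fX" if jf: "m_fld mem A j" for j
  proof -
    obtain a where "mem a S" "m_edge mem f a j" using fld_A[OF jf] by blast
    thus ?thesis using all_chain[OF fX] by blast
  qed
  have vtx: "m_is_vertex mem A fX"
    unfolding m_is_vertex_def using fXfld chains ch_m_chain by blast
  have uniq: "u = fX" if u: "m_is_vertex mem A u" for u
  proof -
    have uf: "m_fld mem A u" using u unfolding m_is_vertex_def by blast
    have c1: "ch u fX" using chains[OF uf] .
    have c2: "ch fX u" using u fXfld ch_m_chain unfolding m_is_vertex_def by blast
    obtain R1 where R1: "mem u R1" "mem fX R1" "\<And>a. mem a R1 \<Longrightarrow> a = u \<or> (\<exists>b. mem b R1 \<and> m_edge mem A b a)"
      using ch_range[OF c1 uf] by blast
    obtain R2 where R2: "mem fX R2" "mem u R2" "\<And>a. mem a R2 \<Longrightarrow> a = fX \<or> (\<exists>b. mem b R2 \<and> m_edge mem A b a)"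
      using ch_range[OF c2 fXfld] by blast
    obtain E where E: "\<And>y. mem y E \<longleftrightarrow> mem y R1 \<or> mem y R2" using union2_ex by blast
    have Ef: "\<forall>x. mem x E \<longrightarrow> m_fld mem A x"
      using E R1(3) R2(3) uf fXfld fld_edge1 by metis
    have "(\<exists>x. mem x E) \<and> (\<forall>x. mem x E \<longrightarrow> m_fld mem A x)" using E R1(1) Ef by blast
    then obtain a where a: "mem a E" "\<And>j. mem j E \<Longrightarrow> \<not> m_edge mem A j a"
      using A_wf unfolding m_wf_def by blast
    have r1: "a = u" if "mem a R1" using R1(3)[OF that] a E by blast
    have r2: "a = fX" if "mem a R2" using R2(3)[OF that] a E by blast
    from a(1) E have "mem a R1 \<or> mem a R2" by blast
    thus ?thesis
    proof
      assume "mem a R1" hence "a = u" by (rule r1)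
      thus ?thesis using r2 R2(2) by blast
    next
      assume "mem a R2" hence "a = fX" by (rule r2)
      thus ?thesis using r1 R1(2) by blast
    qed
  qed
  have vd: "m_vertex_digraph mem A"
    unfolding m_vertex_digraph_def using vtx uniq by blast
  have Ane: "\<not> m_empty mem A" using e0 unfolding m_edge_def m_empty_def by blast
  have ver: "m_ver mem A fX" unfolding m_ver_def using Ane vtx by blast
  have "\<exists>Y. \<forall>y. mem y Y \<longleftrightarrow> mem y S \<and> (\<exists>fa. m_edge mem f y fa \<and> (\<exists>z. m_edge mem A fa z \<or> m_edge mem A z fa))"
    by (rule sep[of "\<lambda>k. if k = 2 then f else A" 0
        "FEx 1 (FAnd (fm_edge 2 0 1 4 5 6) (FEx 3 (FOr (fm_edge 7 1 3 4 5 6) (fm_edge 7 3 1 4 5 6))))"]) simp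
  then obtain Y where Y0: "\<And>y. mem y Y \<longleftrightarrow> mem y S \<and> (\<exists>fa. m_edge mem f y fa \<and> (\<exists>z. m_edge mem A fa z \<or> m_edge mem A z fa))"
    by blast
  have Y: "mem y Y \<longleftrightarrow> mem y S \<and> (\<exists>fa. m_edge mem f y fa \<and> m_fld mem A fa)" for y
    using Y0 unfolding m_fld_def by blast
  have "\<exists>eta. \<forall>p. mem p eta \<longleftrightarrow> mem p W \<and> (\<exists>a fa. mem a Y \<and> m_edge mem f a fa \<and> m_pair mem p fa a)"
    by (rule sep[of "\<lambda>k. if k = 3 then Y else f" 0
        "FEx 1 (FEx 2 (FAnd (FMem 1 3) (FAnd (fm_edge 4 1 2 5 6 7) (fm_pair 0 2 1 5 6))))"]) simp
  then obtain eta where eta: "\<And>p. mem p eta \<longleftrightarrow> mem p W \<and> (\<exists>a fa. mem a Y \<and> m_edge mem f a fa \<and> m_pair mem p fa a)"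
    by blast
  have etaE: "m_edge mem eta x y \<longleftrightarrow> mem y Y \<and> m_edge mem f y x" for x y
  proof
    assume "m_edge mem eta x y"
    then obtain p where p: "mem p eta" "m_pair mem p x y" unfolding m_edge_def by blast
    then obtain a fa where a: "mem a Y" "m_edge mem f a fa" "m_pair mem p fa a" using eta by blast
    have "fa = x \<and> a = y" using pair_inj[OF a(3) p(2)] .
    thus "mem y Y \<and> m_edge mem f y x" using a by blast
  next
    assume H: "mem y Y \<and> m_edge mem f y x"
    obtain p where p: "m_pair mem p x y" using pair_ex by blast
    have "mem y S" using H Y by blast
    hence "mem p W" using Wp[OF Ww[OF f_w] WS p] H by blast
    hence "mem p eta" using eta H p by blast
    thus "m_edge mem eta x y" using p unfolding m_edge_def by blast
  qed
  have Ytr: "m_transitive mem Y"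
    unfolding m_transitive_def
  proof (intro allI impI)
    fix y z assume H: "mem y Y" "mem z y"
    have yS: "mem y S" using H Y by blast
    then obtain fy where fy: "m_edge mem f y fy" using f_total by blast
    have zS: "mem z S" using S_closed[OF yS H(2)] .
    then obtain fz where fz: "m_edge mem f z fz" using f_total by blast
    have "m_edge mem A fz fy" using A_edge zS yS H(2) fz fy by blast
    hence "m_fld mem A fz" using fld_edge2 by blast
    thus "mem z Y" using Y zS fz by blast
  qed
  have etaf: "m_fun mem eta"
    unfolding m_fun_def
  proof (intro conjI allI impI)
    show "m_rel mem eta" unfolding m_rel_def using eta by blast
    fix x y y' assume "m_edge mem eta x y \<and> m_edge mem eta x y'"
    hence "m_edge mem f y x" "m_edge mem f y' x" using etaE by blast+
    thus "y = y'" using f_injD by blast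
  qed
  have etai: "m_injective mem eta"
    unfolding m_injective_def
  proof (intro allI impI)
    fix x x' y assume "m_edge mem eta x y \<and> m_edge mem eta x' y"
    hence "m_edge mem f y x" "m_edge mem f y x'" using etaE by blast+
    thus "x = x'" using f_single by blast
  qed
  have etad: "(\<exists>y. m_edge mem eta x y) \<longleftrightarrow> m_fld mem A x" for x
  proof
    assume "\<exists>y. m_edge mem eta x y"
    then obtain y where "mem y Y" "m_edge mem f y x" using etaE by blast
    moreover then obtain fa where "m_edge mem f y fa" "m_fld mem A fa" using Y by blast
    ultimately show "m_fld mem A x" using f_single by metis
  next
    assume xf: "m_fld mem A x"
    then obtain a where "mem a S" "m_edge mem f a x" using fld_A by blast
    hence "mem a Y" using Y xf by blast
    thus "\<exists>y. m_edge mem eta x y" using etaE \<open>m_edge mem f a x\<close> by blast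
  qed
  have etar: "m_ran mem eta Y"
    unfolding m_ran_def
  proof (intro allI iffI)
    fix y assume "\<exists>x. m_edge mem eta x y" thus "mem y Y" using etaE by blast
  next
    fix y assume "mem y Y"
    moreover then obtain fa where "m_edge mem f y fa" using Y by blast
    ultimately show "\<exists>x. m_edge mem eta x y" using etaE by blast
  qed
  have etam: "\<forall>j k a b. m_edge mem eta j a \<and> m_edge mem eta k b \<longrightarrow> (m_edge mem A j k \<longleftrightarrow> mem a b)"
  proof (intro allI impI)
    fix j k a b assume H: "m_edge mem eta j a \<and> m_edge mem eta k b"
    hence ja: "mem a Y" "m_edge mem f a j" and kb: "mem b Y" "m_edge mem f b k" using etaE by blast+
    have aS: "mem a S" and bS: "mem b S" using ja kb Y by blast+
    show "m_edge mem A j k \<longleftrightarrow> mem a b"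
    proof
      assume "m_edge mem A j k"
      then obtain a' b' where ab: "mem a' S" "mem b' S" "mem a' b'" "m_edge mem f a' j" "m_edge mem f b' k"
        using A_edge by blast
      have "a' = a" using f_injD[OF ab(4) ja(2)] .
      moreover have "b' = b" using f_injD[OF ab(5) kb(2)] .
      ultimately show "mem a b" using ab(3) by simp
    next
      assume "mem a b" thus "m_edge mem A j k" using A_edge aS bS ja kb by blast
    qed
  qed
  have coll: "m_collapse mem A Y eta"
    unfolding m_collapse_def using Ytr etaf etai etad etar etam by blast
  have XY: "mem X Y" using Y X_S fX fXfld by blast
  have val: "m_val mem eta fX X" unfolding m_val_def using etaE XY fX by blast
  have rel: "\<forall>p. mem p A \<longrightarrow> (\<exists>a b. mem a w \<and> mem b w \<and> m_pair mem p a b)" using A_rel by blast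
  show ?thesis using w rel A_wf A_ext vd ver coll val by blast
qed

end


context zm begin

lemma empty_case: assumes X: "m_empty mem X"
  shows "\<exists>A w. m_omega mem w \<and>
           (\<forall>p. mem p A \<longrightarrow> (\<exists>a b. mem a w \<and> mem b w \<and> m_pair mem p a b)) \<and>
           m_wf mem A \<and> m_extensional mem A \<and> m_vertex_digraph mem A \<and>
           (\<exists>v Y eta. m_ver mem A v \<and> m_collapse mem A Y eta \<and> m_val mem eta v X)"
proof -
  obtain w where w: "m_omega mem w" using omega_ex by blast
  obtain e where e: "m_empty mem e" using empty_ex by blast
  have noe: "\<not> m_edge mem e x y" for x y using e unfolding m_edge_def m_empty_def by blast
  have nof: "\<not> m_fld mem e x" for x unfolding m_fld_def using noe by simp
  have wf: "m_wf mem e" unfolding m_wf_def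
  proof (intro allI impI)
    fix S' assume H: "(\<exists>x. mem x S') \<and> (\<forall>x. mem x S' \<longrightarrow> m_fld mem e x)"
    then obtain x where "mem x S'" by blast
    hence "m_fld mem e x" using H by blast
    thus "\<exists>a. mem a S' \<and> (\<forall>j. mem j S' \<longrightarrow> \<not> m_edge mem e j a)" using nof by blast
  qed
  have ex: "m_extensional mem e" unfolding m_extensional_def using nof by simp
  have vd: "m_vertex_digraph mem e" unfolding m_vertex_digraph_def using e by blast
  have ver: "m_ver mem e e" unfolding m_ver_def using e by blast
  have e': "\<not> mem x e" for x using e unfolding m_empty_def by blast
  have coll: "m_collapse mem e e e"
    unfolding m_collapse_def m_transitive_def m_fun_def m_rel_def m_injective_def m_ran_def
    by (simp add: e' noe nof)
  have val: "m_val mem e e X" unfolding m_val_def using noe X by simp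
  have rel: "\<forall>p. mem p e \<longrightarrow> (\<exists>a b. mem a w \<and> mem b w \<and> m_pair mem p a b)" using e' by simp
  show ?thesis using w rel wf ex vd ver coll val by blast
qed

lemma nonempty_case: assumes x0: "mem x0 X"
  shows "\<exists>A w. m_omega mem w \<and>
           (\<forall>p. mem p A \<longrightarrow> (\<exists>a b. mem a w \<and> mem b w \<and> m_pair mem p a b)) \<and>
           m_wf mem A \<and> m_extensional mem A \<and> m_vertex_digraph mem A \<and>
           (\<exists>v Y eta. m_ver mem A v \<and> m_collapse mem A Y eta \<and> m_val mem eta v X)"
proof -
  obtain sX where sX: "m_upair mem sX X X" using upair_ex by blast
  obtain T where T: "m_subset mem sX T" "m_transitive mem T" using ts by blast
  have XT: "mem X T" using sX T(1) unfolding m_upair_def m_subset_def by blast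
  have "\<exists>S. \<forall>y. mem y S \<longleftrightarrow> mem y T \<and> (\<forall>Z. mem X Z \<and> (\<forall>a b. mem a Z \<longrightarrow> mem b a \<longrightarrow> mem b Z) \<longrightarrow> mem y Z)"
    by (rule sep[of "\<lambda>k. X" 0 "FAll 1 (FImp (FAnd (FMem 2 1) (FAll 3 (FAll 4 (FImp (FMem 3 1) (FImp (FMem 4 3) (FMem 4 1)))))) (FMem 0 1))"]) simp
  then obtain S where S: "\<And>y. mem y S \<longleftrightarrow> mem y T \<and> (\<forall>Z. mem X Z \<and> (\<forall>a b. mem a Z \<longrightarrow> mem b a \<longrightarrow> mem b Z) \<longrightarrow> mem y Z)"
    by blast
  obtain w f where wf: "m_omega mem w" "m_fun mem f" "m_injective mem f" "m_dom mem f S"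
     "\<forall>y. (\<exists>x. m_edge mem f x y) \<longrightarrow> mem y w" using count by blast
  obtain U where U: "\<And>y. mem y U \<longleftrightarrow> mem y w \<or> mem y S" using union2_ex by blast
  obtain W where W: "m_subset mem U W" "\<forall>a b p. mem a W \<longrightarrow> mem b W \<longrightarrow> m_pair mem p a b \<longrightarrow> mem p W"
    using pairclosed by blast
  have "\<exists>A. \<forall>p. mem p A \<longleftrightarrow> mem p W \<and> (\<exists>a b fa fb. mem a S \<and> mem b S \<and> mem a b \<and>
       m_edge mem f a fa \<and> m_edge mem f b fb \<and> m_pair mem p fa fb)"
    by (rule sep[of "\<lambda>k. if k = 6 then f else S" 0 "FEx 1 (FEx 2 (FEx 3 (FEx 4 (FAnd (FMem 1 5) (FAnd (FMem 2 5) (FAnd (FMem 1 2) (FAnd (fm_edge 6 1 3 7 8 9) (FAnd (fm_edge 6 2 4 7 8 9) (fm_pair 0 3 4 7 8)))))))))"]) simp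
  then obtain A where A: "\<And>p. mem p A \<longleftrightarrow> mem p W \<and> (\<exists>a b fa fb. mem a S \<and> mem b S \<and> mem a b \<and>
       m_edge mem f a fa \<and> m_edge mem f b fb \<and> m_pair mem p fa fb)" by blast
  have "cons mem X x0 T S w f W A"
    apply (rule cons.intro[OF zm_axioms])
    apply (rule cons_axioms.intro)
    subgoal by (rule x0)
    subgoal by (rule T(2))
    subgoal by (rule XT)
    subgoal by (rule S)
    subgoal by (rule wf(1))
    subgoal by (rule wf(2))
    subgoal by (rule wf(3))
    subgoal by (rule wf(4))
    subgoal using wf(5) by blast
    subgoal using W(1) U unfolding m_subset_def by blast
    subgoal using W(1) U unfolding m_subset_def by blast
    subgoal using W(2) by blast
    subgoal by (rule A)
    done
  thus ?thesis by (rule cons.result)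
qed

end

theorem lemma8p4:
  fixes mem :: "'a \<Rightarrow> 'a \<Rightarrow> bool"
  assumes "Z_FTM_omega mem"
  shows "\<forall>X. \<exists>A w. m_omega mem w \<and>
           (\<forall>p. mem p A \<longrightarrow> (\<exists>a b. mem a w \<and> mem b w \<and> m_pair mem p a b)) \<and>
           m_wf mem A \<and> m_extensional mem A \<and> m_vertex_digraph mem A \<and>
           (\<exists>v Y eta. m_ver mem A v \<and> m_collapse mem A Y eta \<and> m_val mem eta v X)"
proof
  fix X
  interpret zm mem by (rule zm.intro) (rule assms)
  show "\<exists>A w. m_omega mem w \<and>
           (\<forall>p. mem p A \<longrightarrow> (\<exists>a b. mem a w \<and> mem b w \<and> m_pair mem p a b)) \<and>
           m_wf mem A \<and> m_extensional mem A \<and> m_vertex_digraph mem A \<and>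
           (\<exists>v Y eta. m_ver mem A v \<and> m_collapse mem A Y eta \<and> m_val mem eta v X)"
  proof (cases "m_empty mem X")
    case True thus ?thesis by (rule empty_case)
  next
    case False
    then obtain x0 where "mem x0 X" unfolding m_empty_def by blast
    thus ?thesis by (rule nonempty_case)
  qed
qed



end
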